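(* Every Lucasian GNS is $\mathbf P$-Green: for every prime $p$, every power $m$ of $p$, and all $a,b\mid m$, one has $s(m)\equiv\frac m\ell\frac{s(a)s(b)}{s(g)}\bmod s(a)s(b)$, where $g=\gcd(a,b)$, $\ell=\operatorname{lcm}(a,b)$.
   Context: A GNS over a ring $D$ is $s\colon\mathbf N\to D$ with $s(0)=0$, $s(n)$ a non-zero-divisor for $n>0$, and $s(n-k)\mid s(n)-s(k)$ for $n>k>0$. It is Lucasian if $s(a+b)\equiv s(a)+s(b)\bmod s(a)s(b)$ for all $a,b$. $\mathbf P$-Green means $\mathcal F$-Green for $\mathcal F=\bigcup_p p^{\mathbf N}$ (prime powers), where $\mathcal F$-Green means the displayed congruence holds for all $m\in\mathcal F$ and $a,b\mid m$. *)

theory Defs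
  imports "HOL-Computational_Algebra.Primes"
begin

definition non_zero_divisor :: "'a::comm_ring_1 \<Rightarrow> bool" where
  "non_zero_divisor x \<longleftrightarrow> (\<forall>y. x * y = 0 \<longrightarrow> y = 0)"

definition GNS :: "(nat \<Rightarrow> 'a::comm_ring_1) \<Rightarrow> bool" where
  "GNS s \<longleftrightarrow> s 0 = 0 \<and> (\<forall>n>0. non_zero_divisor (s n))
      \<and> (\<forall>n k. 0 < k \<and> k < n \<longrightarrow> s (n - k) dvd s n - s k)"

definition Lucasian :: "(nat \<Rightarrow> 'a::comm_ring_1) \<Rightarrow> bool" where
  "Lucasian s \<longleftrightarrow> (\<forall>a b. s a * s b dvd s (a + b) - (s a + s b))"

text \<open>Exact quotient x / y (meaningful when y is a non-zero-divisor dividing x).\<close>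
definition ring_quot :: "'a::comm_ring_1 \<Rightarrow> 'a \<Rightarrow> 'a" where
  "ring_quot x y = (THE q. x = q * y)"

end

theory Submission
  imports Defs
begin

lemma luc_dvd_mult:
  fixes s :: "nat \<Rightarrow> 'a::comm_ring_1"
  assumes L: "Lucasian s" and s0: "s 0 = 0"
  shows "s b dvd s (n * b)"
proof (induction n)
  case 0 then show ?case using s0 by simp
next
  case (Suc n)
  have "s (n*b) * s b dvd s (n*b + b) - (s (n*b) + s b)" using L unfolding Lucasian_def by blast
  then have "s b dvd s (n*b + b) - (s (n*b) + s b)" using dvd_mult_right by blast
  then have "s b dvd (s (n*b + b) - (s (n*b) + s b)) + s (n*b) + s b"
    using Suc.IH by (intro dvd_add) auto
  then show ?case by (simp add: add.commute)
qed

lemma luc_sq: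
  fixes s :: "nat \<Rightarrow> 'a::comm_ring_1"
  assumes L: "Lucasian s" and s0: "s 0 = 0"
  shows "s b * s b dvd s (n * b) - of_nat n * s b"
proof (induction n)
  case 0 then show ?case using s0 by simp
next
  case (Suc n)
  have h1: "s (n*b) * s b dvd s (n*b + b) - (s (n*b) + s b)" using L unfolding Lucasian_def by blast
  have "s b * s b dvd s (n*b) * s b" using luc_dvd_mult[OF L s0] by (simp add: mult_dvd_mono)
  with h1 have "s b * s b dvd s (n*b + b) - (s (n*b) + s b)" using dvd_trans by blast
  then have "s b * s b dvd (s (n*b + b) - (s (n*b) + s b)) + (s (n * b) - of_nat n * s b)"
    using Suc.IH by (rule dvd_add)
  moreover have "(s (n*b + b) - (s (n*b) + s b)) + (s (n * b) - of_nat n * s b)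
      = s (Suc n * b) - of_nat (Suc n) * s b" by (simp add: algebra_simps)
  ultimately show ?case by simp
qed

lemma rq:
  fixes x y :: "'a::comm_ring_1"
  assumes "non_zero_divisor y"
  shows "ring_quot (y * x) y = x"
  unfolding ring_quot_def
proof (rule the_equality)
  show "y * x = x * y" by simp
next
  fix q assume "y * x = q * y"
  then have "y * (q - x) = 0" by (simp add: algebra_simps)
  then have "q - x = 0" using assms unfolding non_zero_divisor_def by blast
  then show "q = x" by simp
qed

lemma main_le:
  fixes s :: "nat \<Rightarrow> 'a::comm_ring_1"
  assumes G: "GNS s" and L: "Lucasian s" and ab: "a dvd b" and bm: "b dvd m" and m0: "m \<noteq> 0"
  shows "s a * s b dvd s m - of_nat (m div lcm a b) * ring_quot (s a * s b) (s (gcd a b))"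
proof -
  have s0: "s 0 = 0" using G unfolding GNS_def by simp
  have a0: "a > 0" using ab bm m0 by (metis dvd_0_left_iff dvd_trans gr0I)
  have g: "gcd a b = a" using ab by (simp add: gcd_nat.absorb1)
  have l: "lcm a b = b" using ab using lcm_unique_nat[of b a b] by (simp add: lcm.commute)
  have nz: "non_zero_divisor (s a)" using G a0 unfolding GNS_def by blast
  have q: "ring_quot (s a * s b) (s (gcd a b)) = s b" using rq[OF nz] g by simp
  obtain n where mn: "m = n * b" using bm by (metis dvd_def mult.commute)
  have b0: "b > 0" using bm m0 by (metis dvd_0_left_iff gr0I)
  have md: "m div b = n" using mn b0 by simp
  have "s a dvd s b" using luc_dvd_mult[OF L s0, of a] ab by (metis dvd_def mult.commute)
  then have "s a * s b dvd s b * s b" by (simp add: mult_dvd_mono)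
  moreover have "s b * s b dvd s m - of_nat n * s b" using luc_sq[OF L s0] mn by simp
  ultimately show ?thesis using q l md dvd_trans by metis
qed

theorem corollary5p14:
  fixes s :: "nat \<Rightarrow> 'a::comm_ring_1"
  assumes "GNS s" and "Lucasian s"
  shows "\<forall>p k a b. prime p \<longrightarrow> a dvd p ^ k \<longrightarrow> b dvd p ^ k \<longrightarrow>
           s a * s b dvd
             s (p ^ k) - of_nat (p ^ k div lcm a b) * ring_quot (s a * s b) (s (gcd a b))"
proof (intro allI impI)
  fix p k a b :: nat
  assume p: "prime p" and a: "a dvd p ^ k" and b: "b dvd p ^ k"
  have m0: "p ^ k \<noteq> 0" using p by (simp add: prime_gt_0_nat)
  obtain i where i: "a = p ^ i" using a p by (metis divides_primepow_nat)
  obtain j where j: "b = p ^ j" using b p by (metis divides_primepow_nat)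
  show "s a * s b dvd s (p ^ k) - of_nat (p ^ k div lcm a b) * ring_quot (s a * s b) (s (gcd a b))"
  proof (cases "i \<le> j")
    case True
    then have "a dvd b" using i j by (simp add: le_imp_power_dvd)
    then show ?thesis using main_le[OF assms _ b m0] by blast
  next
    case False
    then have "b dvd a" using i j by (simp add: le_imp_power_dvd)
    then have "s b * s a dvd s (p ^ k) - of_nat (p ^ k div lcm b a) * ring_quot (s b * s a) (s (gcd b a))"
      using main_le[OF assms _ a m0] by blast
    then show ?thesis by (simp add: mult.commute gcd.commute lcm.commute)
  qed
qed

end
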